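(* Let $(G,k)$ be an instance and let $u,v$ be adjacent large-dense vertices, neither incident to a multi-edge, with $N(u)\cup\{u\}=N(v)\cup\{v\}$. Then every minimum-size feasible solution $X$ satisfies either $\{u,v\}\subseteq X$ or $\{u,v\}\cap X=\emptyset$.
   Context: Graphs are undirected, without self-loops, possibly with multi-edges. $N(v)$ is the set of vertices adjacent to $v$; $\rho(v)$ is the number of unordered pairs $\{u_1,u_2\}\subseteq N(v)$ joined by at least one edge. A vertex $v$ is large-dense if $|N(v)|>7k$ and $\rho(v)> |N(v)|(|N(v)|-1)/4$. A vertex set induces a clique if between any two distinct vertices there is exactly one edge, and a tree if it is connected and acyclic (two parallel edges form a cycle). A feasible solution is $X\subseteq V$, $|X|\le k$, with every component of $G-X$ a clique or a tree. *)

theory Defs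
  imports Complex_Main
begin

(* A finite undirected multigraph without self-loops: vertex set V and an
   edge-multiplicity function m (m x y = number of edges between x and y). *)
definition multigraph :: "'a set \<Rightarrow> ('a \<Rightarrow> 'a \<Rightarrow> nat) \<Rightarrow> bool" where
  "multigraph V m \<longleftrightarrow> finite V \<and> (\<forall>x y. m x y = m y x) \<and> (\<forall>x. m x x = 0)
     \<and> (\<forall>x y. m x y > 0 \<longrightarrow> x \<in> V \<and> y \<in> V)"

definition nbhd :: "'a set \<Rightarrow> ('a \<Rightarrow> 'a \<Rightarrow> nat) \<Rightarrow> 'a \<Rightarrow> 'a set" where
  "nbhd V m v = {u \<in> V. m v u > 0}"

definition rho :: "'a set \<Rightarrow> ('a \<Rightarrow> 'a \<Rightarrow> nat) \<Rightarrow> 'a \<Rightarrow> nat" where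
  "rho V m v = card {{u1, u2} | u1 u2. u1 \<in> nbhd V m v \<and> u2 \<in> nbhd V m v \<and> u1 \<noteq> u2 \<and> m u1 u2 > 0}"

definition large_dense :: "'a set \<Rightarrow> ('a \<Rightarrow> 'a \<Rightarrow> nat) \<Rightarrow> nat \<Rightarrow> 'a \<Rightarrow> bool" where
  "large_dense V m k v \<longleftrightarrow> card (nbhd V m v) > 7 * k \<and>
     real (rho V m v) > real (card (nbhd V m v)) * (real (card (nbhd V m v)) - 1) / 4"

definition on_multi_edge :: "('a \<Rightarrow> 'a \<Rightarrow> nat) \<Rightarrow> 'a \<Rightarrow> bool" where
  "on_multi_edge m v \<longleftrightarrow> (\<exists>w. m v w \<ge> 2)"

definition adj_in :: "('a \<Rightarrow> 'a \<Rightarrow> nat) \<Rightarrow> 'a set \<Rightarrow> ('a \<times> 'a) set" where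
  "adj_in m S = {(x, y). x \<in> S \<and> y \<in> S \<and> m x y > 0}"

definition connected_in :: "('a \<Rightarrow> 'a \<Rightarrow> nat) \<Rightarrow> 'a set \<Rightarrow> bool" where
  "connected_in m S \<longleftrightarrow> S \<noteq> {} \<and> (\<forall>x\<in>S. \<forall>y\<in>S. (x, y) \<in> (adj_in m S)\<^sup>*)"

definition induces_clique :: "('a \<Rightarrow> 'a \<Rightarrow> nat) \<Rightarrow> 'a set \<Rightarrow> bool" where
  "induces_clique m S \<longleftrightarrow> (\<forall>x\<in>S. \<forall>y\<in>S. x \<noteq> y \<longrightarrow> m x y = 1)"

definition simple_cycle_in :: "('a \<Rightarrow> 'a \<Rightarrow> nat) \<Rightarrow> 'a set \<Rightarrow> 'a list \<Rightarrow> bool" where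
  "simple_cycle_in m S xs \<longleftrightarrow> length xs \<ge> 3 \<and> distinct xs \<and> set xs \<subseteq> S
     \<and> (\<forall>i < length xs. m (xs ! i) (xs ! ((i + 1) mod length xs)) > 0)"

(* acyclic induced multigraph: no 2-cycles (parallel edges) and no longer cycles *)
definition acyclic_in :: "('a \<Rightarrow> 'a \<Rightarrow> nat) \<Rightarrow> 'a set \<Rightarrow> bool" where
  "acyclic_in m S \<longleftrightarrow> (\<forall>x\<in>S. \<forall>y\<in>S. m x y \<le> 1) \<and> (\<nexists>xs. simple_cycle_in m S xs)"

definition induces_tree :: "('a \<Rightarrow> 'a \<Rightarrow> nat) \<Rightarrow> 'a set \<Rightarrow> bool" where
  "induces_tree m S \<longleftrightarrow> connected_in m S \<and> acyclic_in m S"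

definition components_minus :: "'a set \<Rightarrow> ('a \<Rightarrow> 'a \<Rightarrow> nat) \<Rightarrow> 'a set \<Rightarrow> 'a set set" where
  "components_minus V m X =
     {C. \<exists>x \<in> V - X. C = {y \<in> V - X. (x, y) \<in> (adj_in m (V - X))\<^sup>*}}"

definition feasible :: "'a set \<Rightarrow> ('a \<Rightarrow> 'a \<Rightarrow> nat) \<Rightarrow> nat \<Rightarrow> 'a set \<Rightarrow> bool" where
  "feasible V m k X \<longleftrightarrow> X \<subseteq> V \<and> card X \<le> k \<and>
     (\<forall>C \<in> components_minus V m X. induces_clique m C \<or> induces_tree m C)"

definition min_feasible :: "'a set \<Rightarrow> ('a \<Rightarrow> 'a \<Rightarrow> nat) \<Rightarrow> nat \<Rightarrow> 'a set \<Rightarrow> bool" where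
  "min_feasible V m k X \<longleftrightarrow> feasible V m k X \<and> (\<forall>Y. feasible V m k Y \<longrightarrow> card X \<le> card Y)"

end

theory Submission
  imports Defs
begin

lemma closed_reach:
  assumes "(x, y) \<in> (adj_in m T)\<^sup>*" and "x \<in> D"
    and "\<And>a b. a \<in> D \<Longrightarrow> b \<in> T \<Longrightarrow> m a b > 0 \<Longrightarrow> b \<in> D"
  shows "y \<in> D \<and> (x, y) \<in> (adj_in m D)\<^sup>*"
  using assms(1)
proof (induction rule: rtrancl_induct)
  case base
  then show ?case using assms(2) by simp
next
  case (step y z)
  then have yD: "y \<in> D" and zT: "z \<in> T" and myz: "m y z > 0" by (auto simp: adj_in_def)
  then have zD: "z \<in> D" using assms(3) by blast
  have "(y, z) \<in> adj_in m D" using yD zD myz by (simp add: adj_in_def)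
  then show ?case using step zD by (meson rtrancl.rtrancl_into_rtrancl)
qed

lemma adj_in_mono: "A \<subseteq> B \<Longrightarrow> (adj_in m A)\<^sup>* \<subseteq> (adj_in m B)\<^sup>*"
  by (rule rtrancl_mono) (auto simp: adj_in_def)

lemma key:
  assumes mg: "multigraph V m" and uV: "u \<in> V" and vV: "v \<in> V" and muv: "m u v > 0"
    and ldv: "large_dense V m k v" and nme: "\<not> on_multi_edge m u"
    and nb: "insert u (nbhd V m u) = insert v (nbhd V m v)"
    and mf: "min_feasible V m k X" and uX: "u \<in> X" and vX: "v \<notin> X"
  shows False
proof -
  have finV: "finite V" and sym: "\<And>x y. m x y = m y x" and irr: "\<And>x. m x x = 0"
    and inV: "\<And>x y. m x y > 0 \<Longrightarrow> x \<in> V \<and> y \<in> V"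
    using mg by (auto simp: multigraph_def)
  have feas: "feasible V m k X" and minX: "\<And>Y. feasible V m k Y \<Longrightarrow> card X \<le> card Y"
    using mf by (auto simp: min_feasible_def)
  have XV: "X \<subseteq> V" and cardX: "card X \<le> k"
    and compX: "\<And>C. C \<in> components_minus V m X \<Longrightarrow> induces_clique m C \<or> induces_tree m C"
    using feas by (auto simp: feasible_def)
  have finX: "finite X" using XV finV finite_subset by blast
  define N where "N = nbhd V m v"
  define S where "S = V - X"
  define C where "C = {y \<in> S. (v, y) \<in> (adj_in m S)\<^sup>*}"
  have uv: "u \<noteq> v" using muv irr by auto
  have vS: "v \<in> S" using vV vX by (simp add: S_def)
  have vC: "v \<in> C" using vS by (simp add: C_def)
  have CS: "C \<subseteq> S" by (auto simp: C_def)
  have Ccomp: "C \<in> components_minus V m X"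
    unfolding components_minus_def C_def S_def using vS S_def by blast
  have NV: "N \<subseteq> V" by (auto simp: N_def nbhd_def)
  have finN: "finite N" using NV finV finite_subset by blast
  have vN: "v \<notin> N" using irr by (simp add: N_def nbhd_def)
  have NXC: "N - X \<subseteq> C"
  proof
    fix y assume "y \<in> N - X"
    then have yS: "y \<in> S" and "m v y > 0" by (auto simp: N_def nbhd_def S_def)
    then have "(v, y) \<in> adj_in m S" using vS by (simp add: adj_in_def)
    then show "y \<in> C" using yS by (simp add: C_def)
  qed
  have Cclosed: "\<And>a b. a \<in> C \<Longrightarrow> b \<in> S \<Longrightarrow> m a b > 0 \<Longrightarrow> b \<in> C"
  proof -
    fix a b assume "a \<in> C" "b \<in> S" "m a b > 0"
    then have "(v, a) \<in> (adj_in m S)\<^sup>*" "(a, b) \<in> adj_in m S" by (auto simp: C_def adj_in_def)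
    then show "b \<in> C" using \<open>b \<in> S\<close> by (simp add: C_def)
  qed
  have nottree: "\<not> induces_tree m C"
  proof
    assume "induces_tree m C"
    then have nocyc: "\<nexists>xs. simple_cycle_in m C xs" by (simp add: induces_tree_def acyclic_in_def)
    define R where "R = {{u1, u2} | u1 u2. u1 \<in> N \<and> u2 \<in> N \<and> u1 \<noteq> u2 \<and> m u1 u2 > 0}"
    have rhoR: "rho V m v = card R" by (simp add: rho_def R_def N_def)
    have RS: "R \<subseteq> (\<lambda>(a, b). {a, b}) ` ((N \<inter> X) \<times> N)"
    proof
      fix e assume "e \<in> R"
      then obtain a b where e: "e = {a, b}" and aN: "a \<in> N" and bN: "b \<in> N" and ab: "a \<noteq> b"
        and mab: "m a b > 0" by (auto simp: R_def)
      have "a \<in> X \<or> b \<in> X"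
      proof (rule ccontr)
        assume "\<not> (a \<in> X \<or> b \<in> X)"
        then have aC: "a \<in> C" and bC: "b \<in> C" using aN bN NXC by auto
        have av: "a \<noteq> v" "b \<noteq> v" using aN bN vN by auto
        have "m v a > 0" "m v b > 0" using aN bN by (auto simp: N_def nbhd_def)
        then have "m b v > 0" using sym by metis
        have "simple_cycle_in m C [v, a, b]"
          unfolding simple_cycle_in_def
        proof (intro conjI allI impI)
          fix i assume "i < length [v, a, b]"
          then have "i = 0 \<or> i = 1 \<or> i = 2" by auto
          then show "m ([v, a, b] ! i) ([v, a, b] ! ((i + 1) mod length [v, a, b])) > 0"
            using \<open>m v a > 0\<close> mab \<open>m b v > 0\<close> by auto
        qed (use av ab aC bC vC in auto)
        then show False using nocyc by blast
      qed
      then show "e \<in> (\<lambda>(a, b). {a, b}) ` ((N \<inter> X) \<times> N)"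
      proof
        assume "a \<in> X" then show ?thesis using e aN bN by force
      next
        assume "b \<in> X"
        then have "(b, a) \<in> (N \<inter> X) \<times> N" using aN bN by auto
        moreover have "e = {b, a}" using e by auto
        ultimately show ?thesis by force
      qed
    qed
    have "card R \<le> card ((\<lambda>(a, b). {a, b}) ` ((N \<inter> X) \<times> N))"
      using RS finN by (intro card_mono) auto
    also have "\<dots> \<le> card ((N \<inter> X) \<times> N)" using finN by (intro card_image_le) auto
    also have "\<dots> = card (N \<inter> X) * card N" by (simp add: card_cartesian_product)
    also have "\<dots> \<le> k * card N"
    proof -
      have "card (N \<inter> X) \<le> card X" using finX by (intro card_mono) auto
      then show ?thesis using cardX by simp
    qed
    finally have le: "rho V m v \<le> k * card N" using rhoR by simp
    have big: "card N > 7 * k" and dense: "real (rho V m v) > real (card N) * (real (card N) - 1) / 4"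
      using ldv by (auto simp: large_dense_def N_def)
    have "real (card N) - 1 \<ge> 7 * real k" using big by linarith
    then have "real (card N) * (real (card N) - 1) \<ge> real (card N) * (7 * real k)"
      by (intro mult_left_mono) auto
    moreover have "real (rho V m v) \<le> real k * real (card N)"
      using le by (metis of_nat_le_iff of_nat_mult)
    moreover have "real k * real (card N) * 4 \<le> real (card N) * (7 * real k)"
      by simp
    ultimately show False using dense by linarith
  qed
  have clique: "induces_clique m C" using compX[OF Ccomp] nottree by blast
  have CvN: "C \<subseteq> insert v N"
  proof
    fix y assume yC: "y \<in> C"
    show "y \<in> insert v N"
    proof (cases "y = v")
      case False
      then have "m v y = 1" using clique yC vC by (simp add: induces_clique_def)
      then show ?thesis using inV[of v y] by (simp add: N_def nbhd_def)
    qed simp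
  qed
  have uN: "u \<in> N" using muv sym uV by (simp add: N_def nbhd_def)
  have unb: "u \<notin> nbhd V m u" using irr by (simp add: nbhd_def)
  have nbu: "nbhd V m u = insert v N - {u}" using nb unb by (auto simp: N_def)
  have mu1: "m u w \<le> 1" for w
  proof -
    have "\<not> (m u w \<ge> 2)" using nme unfolding on_multi_edge_def by blast
    then show ?thesis by simp
  qed
  define X' where "X' = X - {u}"
  define S' where "S' = V - X'"
  define C' where "C' = insert u C"
  have S'eq: "S' = insert u S" using uV by (auto simp: S'_def S_def X'_def)
  have uC: "u \<notin> C" using CS uX by (auto simp: S_def)
  have C'S': "C' \<subseteq> S'" using CS S'eq by (auto simp: C'_def)
  have uadj: "\<And>y. y \<in> C \<Longrightarrow> m u y = 1"
  proof -
    fix y assume yC: "y \<in> C"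
    then have "y \<in> nbhd V m u" using CvN nbu uC by auto
    then have "m u y > 0" by (simp add: nbhd_def)
    then show "m u y = 1" using mu1[of y] by simp
  qed
  have C'clique: "induces_clique m C'"
    unfolding induces_clique_def C'_def
  proof (intro ballI impI)
    fix x y assume "x \<in> insert u C" "y \<in> insert u C" "x \<noteq> y"
    then show "m x y = 1" using clique uadj sym by (auto simp: induces_clique_def) metis
  qed
  have C'closed: "\<And>a b. a \<in> C' \<Longrightarrow> b \<in> S' \<Longrightarrow> m a b > 0 \<Longrightarrow> b \<in> C'"
  proof -
    fix a b assume a: "a \<in> C'" and b: "b \<in> S'" and mab: "m a b > 0"
    show "b \<in> C'"
    proof (cases "b = u")
      case True then show ?thesis by (simp add: C'_def)
    next
      case bu: False
      then have bS: "b \<in> S" using b S'eq by auto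
      show ?thesis
      proof (cases "a = u")
        case True
        then have "b \<in> nbhd V m u" using mab inV by (simp add: nbhd_def)
        then have "b \<in> insert v N" using nbu by auto
        then have "b \<in> C" using vC NXC bS by (auto simp: S_def)
        then show ?thesis by (simp add: C'_def)
      next
        case False
        then have "a \<in> C" using a by (simp add: C'_def)
        then show ?thesis using Cclosed bS mab by (simp add: C'_def)
      qed
    qed
  qed
  have D'closed: "\<And>a b. a \<in> S' - C' \<Longrightarrow> b \<in> S' \<Longrightarrow> m a b > 0 \<Longrightarrow> b \<in> S' - C'"
  proof -
    fix a b assume a: "a \<in> S' - C'" and b: "b \<in> S'" and mab: "m a b > 0"
    show "b \<in> S' - C'"
    proof (rule ccontr)
      assume "b \<notin> S' - C'"
      then have "b \<in> C'" using b by blast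
      moreover have "m b a > 0" using mab sym by metis
      ultimately have "a \<in> C'" using C'closed a by blast
      then show False using a by blast
    qed
  qed
  have feas': "feasible V m k X'"
    unfolding feasible_def
  proof (intro conjI ballI)
    show "X' \<subseteq> V" using XV by (auto simp: X'_def)
    show "card X' \<le> k" using cardX finX card_Diff1_le[of X u] by (simp add: X'_def)
  next
    fix D assume "D \<in> components_minus V m X'"
    then obtain x where xS': "x \<in> S'" and D: "D = {y \<in> S'. (x, y) \<in> (adj_in m S')\<^sup>*}"
      by (auto simp: components_minus_def S'_def)
    show "induces_clique m D \<or> induces_tree m D"
    proof (cases "x \<in> C'")
      case True
      have "D = C'"
      proof
        show "D \<subseteq> C'" using closed_reach[of x _ m S' C'] C'closed True D by blast
        show "C' \<subseteq> D"
        proof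
          fix y assume yC': "y \<in> C'"
          have "(x, y) \<in> (adj_in m S')\<^sup>*"
          proof (cases "x = y")
            case False
            then have "m x y = 1" using C'clique True yC' by (simp add: induces_clique_def)
            then have "(x, y) \<in> adj_in m S'" using True yC' C'S' by (auto simp: adj_in_def)
            then show ?thesis by blast
          qed simp
          then show "y \<in> D" using D yC' C'S' by blast
        qed
      qed
      then show ?thesis using C'clique by simp
    next
      case False
      have xS: "x \<in> S" using xS' False S'eq by (auto simp: C'_def)
      have DS: "D = {y \<in> S. (x, y) \<in> (adj_in m S)\<^sup>*}"
      proof
        show "D \<subseteq> {y \<in> S. (x, y) \<in> (adj_in m S)\<^sup>*}"
        proof
          fix y assume "y \<in> D"
          then have r: "(x, y) \<in> (adj_in m S')\<^sup>*" using D by blast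
          have "y \<in> S' - C' \<and> (x, y) \<in> (adj_in m (S' - C'))\<^sup>*"
            using closed_reach[OF r, of "S' - C'"] D'closed xS' False by blast
          moreover have "S' - C' \<subseteq> S" using S'eq by (auto simp: C'_def)
          ultimately show "y \<in> {y \<in> S. (x, y) \<in> (adj_in m S)\<^sup>*}"
            using adj_in_mono[of "S' - C'" S m] by blast
        qed
        show "{y \<in> S. (x, y) \<in> (adj_in m S)\<^sup>*} \<subseteq> D"
          using adj_in_mono[of S S' m] S'eq D by blast
      qed
      have "D \<in> components_minus V m X"
        unfolding components_minus_def using DS xS by (auto simp: S_def)
      then show ?thesis using compX by blast
    qed
  qed
  have "card X \<le> card X'" using minX feas' by blast
  moreover have "card X' < card X" using finX uX unfolding X'_def by (meson card_Diff1_less)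
  ultimately show False by simp
qed

theorem mainTheorem14:
  fixes V :: "'a set" and m :: "'a \<Rightarrow> 'a \<Rightarrow> nat" and k :: nat and u v :: 'a and X :: "'a set"
  assumes "multigraph V m"
    and "u \<in> V" and "v \<in> V" and "m u v > 0"
    and "large_dense V m k u" and "large_dense V m k v"
    and "\<not> on_multi_edge m u" and "\<not> on_multi_edge m v"
    and "insert u (nbhd V m u) = insert v (nbhd V m v)"
    and "min_feasible V m k X"
  shows "{u, v} \<subseteq> X \<or> {u, v} \<inter> X = {}"
proof (rule ccontr)
  assume H: "\<not> ?thesis"
  have mvu: "m v u > 0" using assms(1,4) by (simp add: multigraph_def)
  show False
  proof (cases "u \<in> X")
    case True
    then have "v \<notin> X" using H by auto
    then show False using key[OF assms(1,2,3,4,6,7,9,10) True] by blast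
  next
    case False
    then have "v \<in> X" using H by auto
    then show False using key[OF assms(1,3,2) mvu assms(5,8) assms(9)[symmetric] assms(10)] False
      by blast
  qed
qed

end
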